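(* Let $X$ be a nonnegative random variable with density $\pi(x)$ on $[0,\infty)$, and let $\delta>0$. Define the density $\pi'(x)=C(\delta x+1)^{-1/2}\pi(x)$ on $[0,\infty)$, where $C>0$ is the normalizing constant. If $\pi$ is heavy-tailed, then $\pi'$ is also heavy-tailed.
   Context: A density $f$ on $[0,\infty)$ is heavy-tailed if $\int_0^{\infty}f(x)e^{tx}\,dx=\infty$ for all $t>0$. *)

theory Defs
  imports "HOL-Analysis.Analysis"
begin

definition density_on_nonneg :: "(real \<Rightarrow> real) \<Rightarrow> bool" where
  "density_on_nonneg f \<longleftrightarrow>
     f \<in> borel_measurable borel \<and> (\<forall>x\<ge>0. f x \<ge> 0) \<and>
     (\<integral>\<^sup>+ x \<in> {0..}. ennreal (f x) \<partial>lborel) = 1"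

definition heavy_tailed :: "(real \<Rightarrow> real) \<Rightarrow> bool" where
  "heavy_tailed f \<longleftrightarrow>
     (\<forall>t>0. (\<integral>\<^sup>+ x \<in> {0..}. ennreal (f x * exp (t * x)) \<partial>lborel) = \<infinity>)"

end

theory Submission
  imports Defs
begin

theorem lemma2:
  fixes \<pi> :: "real \<Rightarrow> real" and \<delta> C :: real
  assumes "density_on_nonneg \<pi>"
    and "\<delta> > 0"
    and "C > 0"
    and "density_on_nonneg (\<lambda>x. C * (\<delta> * x + 1) powr (-1/2) * \<pi> x)"
    and "heavy_tailed \<pi>"
  shows "heavy_tailed (\<lambda>x. C * (\<delta> * x + 1) powr (-1/2) * \<pi> x)"
  unfolding heavy_tailed_def
proof (intro allI impI)
  fix t :: real assume t: "t > 0"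
  have meas: "\<pi> \<in> borel_measurable borel" and pos: "\<And>x. x \<ge> 0 \<Longrightarrow> \<pi> x \<ge> 0"
    using assms(1) unfolding density_on_nonneg_def by auto
  define M where "M = max 1 (\<delta> / t)"
  have M1: "M \<ge> 1" unfolding M_def by simp
  define c where "c = C * M powr (-1/2)"
  have c0: "c > 0" unfolding c_def using M1 assms(3) by simp
  have inf: "(\<integral>\<^sup>+ x \<in> {0..}. ennreal (\<pi> x * exp ((t/2) * x)) \<partial>lborel) = \<infinity>"
    using assms(5) t unfolding heavy_tailed_def by (metis half_gt_zero)
  have key: "(\<delta> * x + 1) powr (-1/2) \<ge> M powr (-1/2) * exp (-(t/2) * x)" if x: "x \<ge> 0" for x
  proof -
    have "1 + t * x \<le> exp (t * x)" by (rule exp_ge_add_one_self)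
    have "\<delta> * x + 1 \<le> M * (1 + t * x)"
    proof -
      have "\<delta> \<le> M * t" unfolding M_def using t
        by (smt (verit, best) divide_le_eq max.cobounded2 mult.commute)
      hence "\<delta> * x \<le> M * t * x" using x by (simp add: mult_right_mono)
      thus ?thesis using M1 by (simp add: algebra_simps)
    qed
    also have "\<dots> \<le> M * exp (t * x)" using \<open>1 + t * x \<le> exp (t * x)\<close> M1 by simp
    finally have le: "\<delta> * x + 1 \<le> M * exp (t * x)" .
    have "(M * exp (t * x)) powr (-1/2) \<le> (\<delta> * x + 1) powr (-1/2)"
      by (rule powr_mono2') (use le x assms(2) in \<open>auto simp: add_nonneg_pos\<close>)
    moreover have "(M * exp (t * x)) powr (-1/2) = M powr (-1/2) * exp (-(t/2) * x)"
    proof -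
      have "(M * exp (t * x)) powr (-1/2) = M powr (-1/2) * exp (t * x) powr (-1/2)"
        using M1 by (simp add: powr_mult)
      also have "exp (t * x) powr (-1/2) = exp (-(t/2) * x)"
        by (simp add: powr_def)
      finally show ?thesis .
    qed
    ultimately show ?thesis by simp
  qed
  have "(\<integral>\<^sup>+ x \<in> {0..}. ennreal (\<pi> x * exp ((t/2) * x)) \<partial>lborel) * ennreal c =
        (\<integral>\<^sup>+ x. ennreal (c * (\<pi> x * exp ((t/2) * x))) * indicator {0..} x \<partial>lborel)"
    by (subst nn_integral_multc[symmetric]) (use meas c0 in \<open>auto simp: ennreal_mult' mult.commute mult.left_commute intro!: nn_integral_cong\<close>)
  also have "\<dots> \<le> (\<integral>\<^sup>+ x \<in> {0..}. ennreal (C * (\<delta> * x + 1) powr (-1/2) * \<pi> x * exp (t * x)) \<partial>lborel)"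
  proof (rule nn_integral_mono)
    fix x
    show "ennreal (c * (\<pi> x * exp ((t/2) * x))) * indicator {0..} x
      \<le> ennreal (C * (\<delta> * x + 1) powr (-1/2) * \<pi> x * exp (t * x)) * indicator {0..} x"
    proof (cases "x \<ge> 0")
      case True
      have "c * (\<pi> x * exp ((t/2) * x)) = C * (M powr (-1/2) * exp (-(t/2) * x)) * \<pi> x * exp (t * x)"
        proof -
        have "exp (t * x) * exp (-(t/2) * x) = exp ((t/2) * x)"
          proof -
            have "exp (t * x) * exp (-(t/2) * x) = exp (t * x + -(t/2) * x)" by (rule mult_exp_exp)
            also have "t * x + -(t/2) * x = (t/2) * x" by simp
            finally show ?thesis .
          qed
        have "c * (\<pi> x * exp ((t/2) * x)) = C * M powr (-1/2) * \<pi> x * exp ((t/2) * x)"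
          unfolding c_def by (simp only: ac_simps)
        also have "\<dots> = C * M powr (-1/2) * \<pi> x * (exp (t * x) * exp (-(t/2) * x))"
          by (simp only: \<open>exp (t * x) * exp (-(t/2) * x) = exp ((t/2) * x)\<close>)
        also have "\<dots> = C * (M powr (-1/2) * exp (-(t/2) * x)) * \<pi> x * exp (t * x)"
          by (simp only: ac_simps)
        finally show ?thesis .
      qed
      also have "\<dots> \<le> C * (\<delta> * x + 1) powr (-1/2) * \<pi> x * exp (t * x)"
        using key[OF True] pos[OF True] assms(3)
        by (intro mult_right_mono[of _ _ "exp (t * x)"] mult_right_mono[of _ _ "\<pi> x"] mult_left_mono[of _ _ C]) auto
      finally show ?thesis using True by (simp add: ennreal_leI)
    qed simp
  qed
  finally show "(\<integral>\<^sup>+ x \<in> {0..}. ennreal (C * (\<delta> * x + 1) powr (-1/2) * \<pi> x * exp (t * x)) \<partial>lborel) = \<infinity>"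
    using inf c0 by (simp add: ennreal_mult_eq_top_iff top_unique)
qed

end
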